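(* If $r$ divides $s$, then $\nu(n,P^{(r)}_s)\ge\left(\left(\frac{r}{s}\right)^r+o(1)\right)\binom{n}{r}$, where $o(1)\to0$ as $n\to\infty$ with $r,s$ fixed.
   Context: $K^{(r)}_n$ is the ordered complete $r$-uniform hypergraph on $[n]=\{1,\dots,n\}$ with its natural order; a copy of an ordered hypergraph $H$ in $K^{(r)}_n$ is the image of $H$ under an order-preserving injection $V(H)\to[n]$. The natural path $P^{(r)}_s$ has vertices $v_1<\dots<v_s$ and edges all sets of $r$ consecutive vertices $\{v_j,\dots,v_{j+r-1}\}$, $1\le j\le s-r+1$. $\nu(n,H)$ is the maximum number of pairwise edge-disjoint copies of $H$ in $K^{(r)}_n$. *)

theory Defs
  imports Complex_Main
begin

text \<open>An ordered hypergraph H on the vertex set {0..<m} (natural order) with edge set E.\<close>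

definition ordered_copies :: "nat \<Rightarrow> nat \<Rightarrow> nat set set \<Rightarrow> (nat set \<times> nat set set) set" where
  "ordered_copies n m E =
     {(f ` {0..<m}, (\<lambda>e. f ` e) ` E) | f. strict_mono_on {0..<m} f \<and> f ` {0..<m} \<subseteq> {1..n}}"

definition edge_disjoint_family :: "(nat set \<times> nat set set) set \<Rightarrow> bool" where
  "edge_disjoint_family C \<longleftrightarrow> (\<forall>A\<in>C. \<forall>B\<in>C. A \<noteq> B \<longrightarrow> snd A \<inter> snd B = {})"

definition nu :: "nat \<Rightarrow> nat \<Rightarrow> nat set set \<Rightarrow> nat" where
  "nu n m E = Max {card C | C. C \<subseteq> ordered_copies n m E \<and> edge_disjoint_family C}"

definition path_edges :: "nat \<Rightarrow> nat \<Rightarrow> nat set set" where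
  "path_edges r s = {{j..<j + r} | j. j + r \<le> s}"

end

theory Submission
  imports Defs
begin

lemma mod_window: assumes "0 < (r::nat)" "i < r" shows "\<exists>p. j \<le> p \<and> p < j + r \<and> p mod r = i"
proof (cases "(j div r) * r + i \<ge> j")
  case True
  have "(j div r) * r \<le> j" by (simp add: div_times_less_eq_dividend)
  then have "(j div r) * r + i < j + r" using assms by linarith
  then show ?thesis using True assms by (intro exI[of _ "(j div r) * r + i"]) auto
next
  case False
  have e1: "j = (j div r) * r + j mod r" by simp
  have e2: "j mod r < r" using assms by simp
  have e3: "(j div r + 1) * r = (j div r) * r + r" by simp
  have "j < (j div r + 1) * r" using e1 e2 e3 by linarith
  then have "(j div r + 1) * r + i < j + r" using False by (simp add: algebra_simps)
  moreover have "(i + (j div r + 1) * r) mod r = i mod r" by (rule mod_mult_self1)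
  ultimately show ?thesis using False assms \<open>j < (j div r + 1) * r\<close>
    by (intro exI[of _ "(j div r + 1) * r + i"]) (simp add: add.commute)
qed

lemma nu_ge:
  fixes r s n :: nat
  assumes r1: "1 \<le> r" and s0: "0 < s" and dv: "r dvd s"
  shows "nu n s (path_edges r s) \<ge> (n div (s div r)) choose r"
proof -
  define k where "k = s div r"
  define t where "t = n div k"
  define E where "E = path_edges r s"
  have sk: "s = k * r" using dv k_def by simp
  have k0: "k > 0" using sk s0 by (cases k) auto
  have ktn: "k * t \<le> n" unfolding t_def by simp
  define fY where "fY = (\<lambda>Y p. 1 + sorted_list_of_set Y ! (p mod r) + (p div r) * t)"
  define cp where "cp = (\<lambda>Y. (fY Y ` {0..<s}, (\<lambda>e. fY Y ` e) ` E))"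
  define \<Y> where "\<Y> = {Y. Y \<subseteq> {0..<t} \<and> card Y = r}"
  define h where "h = (\<lambda>x. (x - 1) mod t)"
  have ys: "sorted_wrt (<) (sorted_list_of_set Y)" "length (sorted_list_of_set Y) = r"
       "set (sorted_list_of_set Y) = Y" if "Y \<in> \<Y>" for Y
  proof -
    have "finite Y" using that finite_subset[of Y "{0..<t}"] unfolding \<Y>_def by auto
    then show "sorted_wrt (<) (sorted_list_of_set Y)" "length (sorted_list_of_set Y) = r"
       "set (sorted_list_of_set Y) = Y" using that unfolding \<Y>_def by auto
  qed
  have ylt: "sorted_list_of_set Y ! i < t" if "Y \<in> \<Y>" "i < r" for Y i
  proof -
    have "sorted_list_of_set Y ! i \<in> set (sorted_list_of_set Y)"
      using ys(2)[OF that(1)] that(2) by (intro nth_mem) simp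
    then have "sorted_list_of_set Y ! i \<in> Y" using ys(3)[OF that(1)] by simp
    then show ?thesis using that(1) unfolding \<Y>_def by auto
  qed
  have key: "h ` (fY Y ` e) = Y" if Y: "Y \<in> \<Y>" and e: "e \<in> E" for Y e
  proof -
    obtain j where ej: "e = {j..<j+r}" using e unfolding E_def path_edges_def by auto
    have "h (fY Y p) = sorted_list_of_set Y ! (p mod r)" for p
      using ylt[OF Y, of "p mod r"] r1 unfolding h_def fY_def by simp
    then have "h ` (fY Y ` e) = (\<lambda>p. sorted_list_of_set Y ! (p mod r)) ` e" by (auto simp: image_image)
    also have "\<dots> = (\<lambda>i. sorted_list_of_set Y ! i) ` {0..<r}"
    proof
      show "(\<lambda>p. sorted_list_of_set Y ! (p mod r)) ` e \<subseteq> (!) (sorted_list_of_set Y) ` {0..<r}"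
        using r1 by auto
      show "(!) (sorted_list_of_set Y) ` {0..<r} \<subseteq> (\<lambda>p. sorted_list_of_set Y ! (p mod r)) ` e"
      proof
        fix x assume "x \<in> (!) (sorted_list_of_set Y) ` {0..<r}"
        then obtain i where i: "i < r" "x = sorted_list_of_set Y ! i" by auto
        obtain p where "j \<le> p" "p < j + r" "p mod r = i" using mod_window[of r i j] i r1 by auto
        then show "x \<in> (\<lambda>p. sorted_list_of_set Y ! (p mod r)) ` e" using i ej by force
      qed
    qed
    also have "\<dots> = set (sorted_list_of_set Y)" using ys(2)[OF Y] by (simp add: set_conv_nth image_def) (metis atLeastLessThan_iff zero_le)
    finally show ?thesis using ys(3)[OF Y] by simp
  qed
  have E0: "{0..<r} \<in> E" unfolding E_def path_edges_def using sk k0 by force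
  have incp: "cp Y \<in> ordered_copies n s E" if Y: "Y \<in> \<Y>" for Y
  proof -
    have sm: "strict_mono_on {0..<s} (fY Y)"
    proof (rule strict_mono_onI)
      fix p q assume "p \<in> {0..<s}" "q \<in> {0..<s}" "p < q"
      show "fY Y p < fY Y q"
      proof (cases "p div r = q div r")
        case True
        then have "p mod r < q mod r" using \<open>p < q\<close>
          by (metis div_mult_mod_eq add_less_cancel_left linorder_neqE_nat not_less_iff_gr_or_eq)
        then have "sorted_list_of_set Y ! (p mod r) < sorted_list_of_set Y ! (q mod r)"
          using ys[OF Y] r1 by (metis sorted_wrt_nth_less mod_less_divisor less_le_trans zero_less_one)
        then show ?thesis unfolding fY_def using True by simp
      next
        case False
        then have "p div r < q div r" using \<open>p < q\<close> by (meson div_le_mono le_less not_le)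
        then have "(p div r + 1) * t \<le> (q div r) * t" using mult_le_mono1[of "p div r + 1" "q div r" t] by linarith
        moreover have "sorted_list_of_set Y ! (p mod r) < t" using ylt[OF Y] r1 by simp
        ultimately show ?thesis unfolding fY_def by simp
      qed
    qed
    have "fY Y p \<in> {1..n}" if "p < s" for p
    proof -
      have "p div r < k" using that sk r1 by (simp add: less_mult_imp_div_less)
      then have "(p div r + 1) * t \<le> k * t" using mult_le_mono1[of "p div r + 1" k t] by linarith
      moreover have "sorted_list_of_set Y ! (p mod r) < t" using ylt[OF Y] r1 by simp
      ultimately show ?thesis unfolding fY_def using ktn by simp
    qed
    then show ?thesis using sm unfolding ordered_copies_def cp_def by auto
  qed
  have inj: "inj_on cp \<Y>"
  proof
    fix Y Y' assume Y: "Y \<in> \<Y>" and Y': "Y' \<in> \<Y>" and eq: "cp Y = cp Y'"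
    have "fY Y ` {0..<r} \<in> snd (cp Y)" using E0 unfolding cp_def by simp
    then have "fY Y ` {0..<r} \<in> snd (cp Y')" using eq by simp
    then obtain e where e: "e \<in> E" "fY Y ` {0..<r} = fY Y' ` e" unfolding cp_def by auto
    have "Y = h ` (fY Y ` {0..<r})" using key[OF Y E0] by simp
    also have "\<dots> = h ` (fY Y' ` e)" using e(2) by simp
    also have "\<dots> = Y'" using key[OF Y' e(1)] .
    finally show "Y = Y'" .
  qed
  have disj: "edge_disjoint_family (cp ` \<Y>)"
    unfolding edge_disjoint_family_def
  proof (intro ballI impI)
    fix A B assume "A \<in> cp ` \<Y>" "B \<in> cp ` \<Y>" "A \<noteq> B"
    then obtain Y Y' where Y: "Y \<in> \<Y>" "A = cp Y" and Y': "Y' \<in> \<Y>" "B = cp Y'" "Y \<noteq> Y'" by auto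
    show "snd A \<inter> snd B = {}"
    proof (rule ccontr)
      assume "snd A \<inter> snd B \<noteq> {}"
      then obtain e e' where ee: "e \<in> E" "e' \<in> E" "fY Y ` e = fY Y' ` e'"
        using Y Y' unfolding cp_def by auto
      have "Y = h ` (fY Y ` e)" using key[OF Y(1) ee(1)] by simp
      also have "\<dots> = h ` (fY Y' ` e')" using ee(3) by simp
      also have "\<dots> = Y'" using key[OF Y'(1) ee(2)] .
      finally show False using Y'(3) by simp
    qed
  qed
  have Esub: "e \<subseteq> {0..<s}" if "e \<in> E" for e
    using that unfolding E_def path_edges_def by auto
  have fin: "finite (ordered_copies n s E)"
  proof (rule finite_subset)
    show "ordered_copies n s E \<subseteq> Pow {1..n} \<times> Pow (Pow {1..n})"
    proof
      fix x assume "x \<in> ordered_copies n s E"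
      then obtain f where x: "x = (f ` {0..<s}, (\<lambda>e. f ` e) ` E)" and fs: "f ` {0..<s} \<subseteq> {1..n}"
        unfolding ordered_copies_def by auto
      have "f ` e \<subseteq> {1..n}" if "e \<in> E" for e
        using image_mono[OF Esub[OF that], of f] fs by (rule order_trans)
      then have "(\<lambda>e. f ` e) ` E \<subseteq> Pow {1..n}" by blast
      then show "x \<in> Pow {1..n} \<times> Pow (Pow {1..n})" using x fs by simp
    qed
    show "finite (Pow {1..n} \<times> Pow (Pow {1..n}))" by simp
  qed
  define S where "S = {card C | C. C \<subseteq> ordered_copies n s E \<and> edge_disjoint_family C}"
  have c1: "card (cp ` \<Y>) = t choose r"
    using card_image[OF inj] n_subsets[of "{0..<t}" r] unfolding \<Y>_def by simp
  have sub: "cp ` \<Y> \<subseteq> ordered_copies n s E" using incp by blast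
  have mem: "card (cp ` \<Y>) \<in> S" unfolding S_def using sub disj by blast
  have finS: "finite S"
  proof (rule finite_subset)
    show "S \<subseteq> {0..card (ordered_copies n s E)}"
    proof
      fix x assume "x \<in> S"
      then obtain C where "x = card C" "C \<subseteq> ordered_copies n s E" unfolding S_def by blast
      then show "x \<in> {0..card (ordered_copies n s E)}" using card_mono[OF fin] by simp
    qed
  qed simp
  have "t choose r \<le> Max S" using Max_ge[OF finS mem] c1 by simp
  then have "t choose r \<le> nu n s E" unfolding nu_def S_def .
  then show ?thesis unfolding E_def t_def k_def .
qed

lemma div_ratio: assumes k: "0 < (k::nat)"
  shows "(\<lambda>n. real (n div k) / real n) \<longlonglongrightarrow> 1 / real k"
proof (rule tendsto_sandwich[of "\<lambda>n. 1 / real k - 1 / real n" _ _ "\<lambda>n. 1 / real k"])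
  have b: "real n / real k - 1 \<le> real (n div k)" "real (n div k) \<le> real n / real k" for n
  proof -
    have e: "real n = real k * real (n div k) + real (n mod k)"
      by (metis div_mult_mod_eq of_nat_add of_nat_mult mult.commute)
    have "real (n mod k) < real k" using k by simp
    then show "real n / real k - 1 \<le> real (n div k)" "real (n div k) \<le> real n / real k"
      using k e by (simp_all add: field_simps)
  qed
  show "\<forall>\<^sub>F n in sequentially. 1 / real k - 1 / real n \<le> real (n div k) / real n"
    using eventually_gt_at_top[of 0]
  proof eventually_elim
    case (elim n)
    have "(real n / real k - 1) / real n \<le> real (n div k) / real n"
      using b(1)[of n] elim by (simp add: divide_right_mono)
    then show ?case using elim k by (simp add: field_simps)
  qed
  show "\<forall>\<^sub>F n in sequentially. real (n div k) / real n \<le> 1 / real k"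
    using eventually_gt_at_top[of 0]
  proof eventually_elim
    case (elim n)
    have "real (n div k) / real n \<le> (real n / real k) / real n"
      by (rule divide_right_mono[OF b(2)]) simp
    also have "\<dots> = 1 / real k" using elim by simp
    finally show ?case .
  qed
  show "(\<lambda>n. 1 / real k - 1 / real n) \<longlonglongrightarrow> 1 / real k"
    using tendsto_diff[OF tendsto_const[of "1 / real k"] lim_inverse_n'] by simp
qed auto

lemma factor_lim: assumes k: "0 < (k::nat)"
  shows "(\<lambda>n. (real (n div k) - real i) / (real n - real i)) \<longlonglongrightarrow> 1 / real k"
proof -
  have in0: "(\<lambda>n. real i / real n) \<longlonglongrightarrow> 0"
    using tendsto_mult[OF tendsto_const[of "real i"] lim_inverse_n'] by simp
  have "(\<lambda>n. (real (n div k) / real n - real i / real n) / (1 - real i / real n)) \<longlonglongrightarrow> (1 / real k - 0) / (1 - 0)"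
    by (intro tendsto_intros div_ratio k in0) auto
  then have l: "(\<lambda>n. (real (n div k) / real n - real i / real n) / (1 - real i / real n)) \<longlonglongrightarrow> 1 / real k" by simp
  show ?thesis
  proof (rule Lim_transform_eventually[OF l])
    show "\<forall>\<^sub>F n in sequentially. (real (n div k) / real n - real i / real n) / (1 - real i / real n) = (real (n div k) - real i) / (real n - real i)"
      using eventually_gt_at_top[of i]
    proof eventually_elim
      case (elim n)
      then have "real n \<noteq> 0" "real n - real i \<noteq> 0" by auto
      then show ?case by (simp add: field_simps)
    qed
  qed
qed

lemma choose_real: "real (m choose r) = (\<Prod>i = 0..<r. real m - real i) / fact r"
proof -
  have "real (m choose r) = real m gchoose r" by (simp add: binomial_gbinomial)
  also have "\<dots> = (\<Prod>i = 0..<r. real m - of_nat i) / fact r"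
    using gbinomial_mult_fact'[of "real m" r] by (simp add: field_simps)
  finally show ?thesis by simp
qed

lemma ratio_lim: assumes k: "0 < (k::nat)"
  shows "(\<lambda>n. real (n div k choose r) / real (n choose r)) \<longlonglongrightarrow> (1 / real k) ^ r"
proof -
  have eq: "real (n div k choose r) / real (n choose r) = (\<Prod>i = 0..<r. (real (n div k) - real i) / (real n - real i))" for n
    unfolding choose_real prod_dividef by (simp add: field_simps)
  have "(\<lambda>n. \<Prod>i = 0..<r. (real (n div k) - real i) / (real n - real i)) \<longlonglongrightarrow> (\<Prod>i = 0..<r. 1 / real k)"
    by (intro tendsto_prod factor_lim k)
  then show ?thesis unfolding eq by simp
qed

theorem proposition3p1:
  fixes r s :: nat
  assumes "1 \<le> r" and "0 < s" and "r dvd s"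
  shows "\<exists>g :: nat \<Rightarrow> real. g \<longlonglongrightarrow> 0 \<and>
           (\<forall>n. real (nu n s (path_edges r s)) \<ge> ((real r / real s) ^ r + g n) * real (n choose r))"
proof -
  define k where "k = s div r"
  have sk: "s = k * r" using assms(3) k_def by simp
  have k0: "k > 0" using sk assms(2) by (cases k) auto
  have rs: "real r / real s = 1 / real k" using sk assms(1) by simp
  define g where "g = (\<lambda>n. real (n div k choose r) / real (n choose r) - (real r / real s) ^ r)"
  have "g \<longlonglongrightarrow> (1 / real k) ^ r - (real r / real s) ^ r"
    unfolding g_def by (intro tendsto_intros ratio_lim k0)
  then have "g \<longlonglongrightarrow> 0" using rs by simp
  moreover have "real (nu n s (path_edges r s)) \<ge> ((real r / real s) ^ r + g n) * real (n choose r)" for n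
  proof (cases "n choose r = 0")
    case True
    then have z: "real (n choose r) = 0" by simp
    show ?thesis unfolding z by simp
  next
    case False
    then have "((real r / real s) ^ r + g n) * real (n choose r) = real (n div k choose r)"
      unfolding g_def by simp
    also have "\<dots> \<le> real (nu n s (path_edges r s))"
      using nu_ge[OF assms] unfolding k_def by simp
    finally show ?thesis .
  qed
  ultimately show ?thesis by blast
qed

end
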